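(* Let $S \geq 1$ and, for $i = 1,\dots,S$, let $\boldsymbol{M}_i \in \mathbb{R}^{m_i \times m_i}$ be symmetric positive definite, let $\boldsymbol{K}_i \in \mathbb{R}^{m_i \times m_i}$ be symmetric positive semidefinite, and let $\boldsymbol{C}_i \in \mathbb{R}^{p \times m_i}$ be signed Boolean matrices such that $[\boldsymbol{C}_1 \ \cdots \ \boldsymbol{C}_S]$ has full row rank $p$. Let $0 < \gamma \leq 1$ and $\Delta t > 0$, and if $\gamma < 1/2$ assume in addition that $\Delta t \, (1-2\gamma)\, \omega_i^{\max} < 2$ for every $i$, where $\omega_i^{\max}$ is the largest eigenvalue of the generalized eigenvalue problem $\boldsymbol{K}_i \boldsymbol{\phi} = \omega \boldsymbol{M}_i \boldsymbol{\phi}$. Suppose that vectors $\boldsymbol{d}_i^{(n)} \in \mathbb{R}^{m_i}$ ($n \geq 0$), $\boldsymbol{v}_i^{(n+\gamma)} \in \mathbb{R}^{m_i}$ ($n\ge0$) and $\boldsymbol{\lambda}^{(n+\gamma)} \in \mathbb{R}^p$ ($n \ge 0$) satisfy, for all $n \geq 0$ and all $i$ (the modified $\boldsymbol{d}$-continuity method with zero external forcing): $\boldsymbol{M}_i \boldsymbol{v}_i^{(n+\gamma)} + \boldsymbol{K}_i\left((1-\gamma)\boldsymbol{d}_i^{(n)} + \gamma \boldsymbol{d}_i^{(n+1)}\right) = \boldsymbol{C}_i^{\mathrm{T}} \boldsymbol{\lambda}^{(n+\gamma)}$, $\boldsymbol{d}_i^{(n+1)} = \boldsymbol{d}_i^{(n)}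 + \Delta t\, \boldsymbol{v}_i^{(n+\gamma)}$, and $\sum_{i=1}^S \boldsymbol{C}_i \boldsymbol{d}_i^{(n+1)} = \boldsymbol{0}$. Define, for $n \geq 0$, $\boldsymbol{v}_i^{(n+1)} := \gamma \boldsymbol{v}_i^{(n+\gamma)} + (1-\gamma)\boldsymbol{v}_i^{(n+1+\gamma)}$ and $\boldsymbol{\lambda}^{(n+1)} := \gamma \boldsymbol{\lambda}^{(n+\gamma)} + (1-\gamma)\boldsymbol{\lambda}^{(n+1+\gamma)}$. Then the sequences $(\boldsymbol{d}_i^{(n)})_n$, $(\boldsymbol{v}_i^{(n+\gamma)})_n$, $(\boldsymbol{\lambda}^{(n+\gamma)})_n$, $(\boldsymbol{v}_i^{(n+1)})_n$ and $(\boldsymbol{\lambda}^{(n+1)})_n$ are all bounded.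
   Context: A signed Boolean matrix is a matrix whose entries are in $\{-1,0,+1\}$ and each of whose rows has at most one nonzero entry. A sequence of vectors is bounded if there is a constant $C$ independent of $n$ with $\|\boldsymbol{x}^{(n)}\| < C$ for all $n$. The condition on $\Delta t$ for $\gamma<1/2$ is that $\Delta t$ be smaller than the critical time step $2/(\omega_i^{\max}(1-2\gamma))$ of each unconstrained subdomain (no restriction when $\omega_i^{\max}=0$ or $\gamma \ge 1/2$). *)

theory Defs
  imports "Jordan_Normal_Form.Matrix" "Jordan_Normal_Form.DL_Rank"
begin

definition sym_mat :: "real mat \<Rightarrow> bool" where
  "sym_mat A \<longleftrightarrow> square_mat A \<and> transpose_mat A = A"

definition pos_def_mat :: "real mat \<Rightarrow> bool" where
  "pos_def_mat A \<longleftrightarrow> sym_mat A \<and>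
     (\<forall>x \<in> carrier_vec (dim_row A). x \<noteq> 0\<^sub>v (dim_row A) \<longrightarrow> x \<bullet> (A *\<^sub>v x) > 0)"

definition pos_semidef_mat :: "real mat \<Rightarrow> bool" where
  "pos_semidef_mat A \<longleftrightarrow> sym_mat A \<and>
     (\<forall>x \<in> carrier_vec (dim_row A). x \<bullet> (A *\<^sub>v x) \<ge> 0)"

definition signed_boolean_mat :: "real mat \<Rightarrow> bool" where
  "signed_boolean_mat A \<longleftrightarrow>
     (\<forall>r < dim_row A. \<forall>c < dim_col A. A $$ (r,c) \<in> {-1, 0, 1}) \<and>
     (\<forall>r < dim_row A. \<forall>c1 < dim_col A. \<forall>c2 < dim_col A.
        A $$ (r,c1) \<noteq> 0 \<longrightarrow> A $$ (r,c2) \<noteq> 0 \<longrightarrow> c1 = c2)"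

text \<open>Horizontal block concatenation [C_0 ... C_{S-1}] of p-row matrices.\<close>
definition hblock :: "nat \<Rightarrow> nat \<Rightarrow> (nat \<Rightarrow> real mat) \<Rightarrow> real mat" where
  "hblock p S C = mat_of_cols p (concat (map (\<lambda>i. cols (C i)) [0..<S]))"

definition gen_eigenvalues :: "real mat \<Rightarrow> real mat \<Rightarrow> real set" where
  "gen_eigenvalues K M = {\<omega>. \<exists>\<phi> \<in> carrier_vec (dim_row K).
      \<phi> \<noteq> 0\<^sub>v (dim_row K) \<and> K *\<^sub>v \<phi> = \<omega> \<cdot>\<^sub>v (M *\<^sub>v \<phi>)}"

definition omega_max :: "real mat \<Rightarrow> real mat \<Rightarrow> real" where
  "omega_max K M = Max (gen_eigenvalues K M)"

definition vnorm :: "real vec \<Rightarrow> real" where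
  "vnorm x = sqrt (x \<bullet> x)"

definition bounded_seq :: "(nat \<Rightarrow> real vec) \<Rightarrow> bool" where
  "bounded_seq x \<longleftrightarrow> (\<exists>B. \<forall>n. vnorm (x n) < B)"

end

theory Submission
  imports Defs "HOL-Analysis.Function_Topology" "Jordan_Normal_Form.Char_Poly"
begin


definition bf :: "real mat \<Rightarrow> real vec \<Rightarrow> real vec \<Rightarrow> real" where
  "bf A x y = x \<bullet> (A *\<^sub>v y)"

context fixes A :: "real mat" and m :: nat assumes A: "A \<in> carrier_mat m m"
begin
lemma bf_add_l: "x \<in> carrier_vec m \<Longrightarrow> y \<in> carrier_vec m \<Longrightarrow> z \<in> carrier_vec m \<Longrightarrow>
  bf A (x + y) z = bf A x z + bf A y z"
  unfolding bf_def using A by (simp add: add_scalar_prod_distrib[of _ m])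
lemma bf_add_r: "x \<in> carrier_vec m \<Longrightarrow> y \<in> carrier_vec m \<Longrightarrow> z \<in> carrier_vec m \<Longrightarrow>
  bf A x (y + z) = bf A x y + bf A x z"
  unfolding bf_def using A by (simp add: mult_add_distrib_mat_vec[OF A] scalar_prod_add_distrib[of _ m])
lemma bf_smult_l: "x \<in> carrier_vec m \<Longrightarrow> z \<in> carrier_vec m \<Longrightarrow>
  bf A (c \<cdot>\<^sub>v x) z = c * bf A x z"
  unfolding bf_def using A by (simp add: smult_scalar_prod_distrib[of _ m])
lemma bf_smult_r: "x \<in> carrier_vec m \<Longrightarrow> z \<in> carrier_vec m \<Longrightarrow>
  bf A x (c \<cdot>\<^sub>v z) = c * bf A x z"
  unfolding bf_def using A by (simp add: mult_mat_vec[OF A] scalar_prod_smult_distrib[of _ m])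
lemma bf_sym: assumes "sym_mat A" "x \<in> carrier_vec m" "y \<in> carrier_vec m"
  shows "bf A x y = bf A y x"
proof -
  have t: "transpose_mat A = A" using assms(1) unfolding sym_mat_def by auto
  have "(transpose_mat A *\<^sub>v x) \<bullet> y = x \<bullet> (A *\<^sub>v y)"
    by (rule transpose_vec_mult_scalar[OF A assms(3) assms(2)])
  hence "(A *\<^sub>v x) \<bullet> y = x \<bullet> (A *\<^sub>v y)" using t by simp
  moreover have "(A *\<^sub>v x) \<bullet> y = y \<bullet> (A *\<^sub>v x)"
    by (rule comm_scalar_prod[of _ m], insert A assms, auto)
  ultimately show ?thesis unfolding bf_def by simp
qed
end


lemma (in vec_space) span_full:
  assumes H: "H \<in> carrier_mat n N" and r: "rank H = n" and x: "x \<in> carrier_vec n"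
  shows "\<exists>A a. finite A \<and> A \<subseteq> set (cols H) \<and> x = lincomb a A"
proof -
  have cH: "set (cols H) \<subseteq> carrier_vec n" using H cols_dim by blast
  obtain U where U: "finite U" "maximal U (\<lambda>T. T \<subseteq> set (cols H) \<and> lin_indpt T)"
    using maximal_exists_superset[of "set (cols H)" "\<lambda>T. T \<subseteq> set (cols H) \<and> lin_indpt T" "{}"]
    by (auto simp: lin_dep_def)
  have cU: "card U = n" using rank_card_indpt[OF H U(2)] r by simp
  have UH: "U \<subseteq> set (cols H)" "lin_indpt U" using U(2) unfolding maximal_def by auto
  have "basis U"
    by (rule dim_li_is_basis, auto simp: U(1) UH cU dim_is_n intro: fin_dim) (use UH cH in auto)
  hence "span U = carrier_vec n" unfolding basis_def by auto
  moreover have "span U \<subseteq> span (set (cols H))" by (rule span_is_monotone[OF UH(1)])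
  ultimately have "x \<in> span (set (cols H))" using x by auto
  thus ?thesis unfolding span_def by auto
qed

lemma (in vec_space) lincomb_dot:
  assumes A: "finite A" "A \<subseteq> carrier_vec n" and y: "y \<in> carrier_vec n"
  shows "lincomb a A \<bullet> y = (\<Sum>u\<in>A. a u * (u \<bullet> y))"
proof -
  have d: "dim_vec (lincomb a A) = n" using A by (metis lincomb_closed carrier_vecD)
  have "lincomb a A \<bullet> y = (\<Sum>i<n. lincomb a A $ i * y $ i)"
    unfolding scalar_prod_def using y d by (simp add: atLeast0LessThan)
  also have "\<dots> = (\<Sum>i<n. (\<Sum>u\<in>A. a u * u $ i) * y $ i)"
    by (rule sum.cong, auto simp: lincomb_index[OF _ A(2)])
  also have "\<dots> = (\<Sum>u\<in>A. a u * (\<Sum>i<n. u $ i * y $ i))"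
    by (simp add: sum_distrib_left sum_distrib_right mult.assoc sum.swap[of _ A])
  also have "\<dots> = (\<Sum>u\<in>A. a u * (u \<bullet> y))"
    by (rule sum.cong, insert A y, auto simp: scalar_prod_def atLeast0LessThan)
  finally show ?thesis .
qed


lemma bf_sum: assumes A: "A \<in> carrier_mat m m" and x: "x \<in> carrier_vec m" and y: "y \<in> carrier_vec m"
  shows "bf A x y = (\<Sum>j<m. \<Sum>k<m. x $ j * A $$ (j,k) * y $ k)"
proof -
  have "bf A x y = (\<Sum>j<m. x $ j * (A *\<^sub>v y) $ j)"
    unfolding bf_def scalar_prod_def using A by (simp add: atLeast0LessThan)
  also have "\<dots> = (\<Sum>j<m. x $ j * (\<Sum>k<m. A $$ (j,k) * y $ k))"
    by (rule sum.cong, insert A y, auto simp: scalar_prod_def atLeast0LessThan)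
  finally show ?thesis by (simp add: sum_distrib_left mult.assoc)
qed

lemma dot_self_sum: "(x::real vec) \<in> carrier_vec m \<Longrightarrow> x \<bullet> x = (\<Sum>j<m. x $ j * x $ j)"
  unfolding scalar_prod_def by (simp add: atLeast0LessThan)

lemma comp_sq_le: assumes "(x::real vec) \<in> carrier_vec m" "j < m" shows "x $ j * x $ j \<le> x \<bullet> x"
proof -
  have "x $ j * x $ j \<le> (\<Sum>j<m. x $ j * x $ j)"
    by (rule member_le_sum[where f="\<lambda>j. x $ j * x $ j"], insert assms, auto)
  thus ?thesis using dot_self_sum[OF assms(1)] by simp
qed

lemma dot_self_nonneg: "(x::real vec) \<bullet> x \<ge> 0"
  unfolding scalar_prod_def by (auto intro: sum_nonneg)

lemma abs_prod_le: "\<bar>(a::real) * b\<bar> \<le> (a * a + b * b) / 2"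
proof -
  have "0 \<le> (a - b) * (a - b)" "0 \<le> (a + b) * (a + b)" by auto
  thus ?thesis by (simp add: algebra_simps abs_if)
qed

lemma bf_abs_bound: assumes A: "A \<in> carrier_mat m m" and x: "x \<in> carrier_vec m"
  shows "\<bar>bf A x x\<bar> \<le> (\<Sum>j<m. \<Sum>k<m. \<bar>A $$ (j,k)\<bar>) * (x \<bullet> x)"
proof -
  have "\<bar>bf A x x\<bar> \<le> (\<Sum>j<m. \<Sum>k<m. \<bar>x $ j * A $$ (j,k) * x $ k\<bar>)"
    unfolding bf_sum[OF A x x] by (rule order.trans[OF sum_abs], rule sum_mono, rule sum_abs)
  also have "\<dots> \<le> (\<Sum>j<m. \<Sum>k<m. \<bar>A $$ (j,k)\<bar> * (x \<bullet> x))"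
  proof (rule sum_mono, rule sum_mono)
    fix j k assume j: "j \<in> {..<m}" and k: "k \<in> {..<m}"
    have h1: "x $ j * x $ j \<le> x \<bullet> x" "x $ k * x $ k \<le> x \<bullet> x" using comp_sq_le[OF x] j k by auto
    have "\<bar>x $ j * x $ k\<bar> \<le> (x $ j * x $ j + x $ k * x $ k) / 2"
      by (rule abs_prod_le)
    moreover have "(x $ j * x $ j + x $ k * x $ k) / 2 \<le> x \<bullet> x" using h1 by (simp add: field_simps)
    ultimately have "\<bar>x $ j * x $ k\<bar> \<le> x \<bullet> x" by (rule order.trans)
    hence "\<bar>A $$ (j,k)\<bar> * \<bar>x $ j * x $ k\<bar> \<le> \<bar>A $$ (j,k)\<bar> * (x \<bullet> x)"
      by (rule mult_left_mono, auto)
    thus "\<bar>x $ j * A $$ (j,k) * x $ k\<bar> \<le> \<bar>A $$ (j,k)\<bar> * (x \<bullet> x)"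
      by (simp add: abs_mult algebra_simps)
  qed
  finally show ?thesis by (simp add: sum_distrib_right)
qed

lemma bf_quad: assumes A: "A \<in> carrier_mat m m" "sym_mat A" and x: "x \<in> carrier_vec m" and y: "y \<in> carrier_vec m"
  shows "bf A (a \<cdot>\<^sub>v x + b \<cdot>\<^sub>v y) (a \<cdot>\<^sub>v x + b \<cdot>\<^sub>v y) = a*a*bf A x x + 2*a*b*bf A x y + b*b*bf A y y"
  using bf_sym[OF A(1) A(2) y x] x y
  by (simp add: bf_add_l[OF A(1)] bf_add_r[OF A(1)] bf_smult_l[OF A(1)] bf_smult_r[OF A(1)] algebra_simps)

lemma psd_quad: assumes A: "A \<in> carrier_mat m m" "pos_semidef_mat A" and x: "x \<in> carrier_vec m" and y: "y \<in> carrier_vec m"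
  shows "0 \<le> a*a*bf A x x + 2*a*b*bf A x y + b*b*bf A y y"
proof -
  have "sym_mat A" using A(2) unfolding pos_semidef_mat_def by auto
  moreover have "0 \<le> bf A (a \<cdot>\<^sub>v x + b \<cdot>\<^sub>v y) (a \<cdot>\<^sub>v x + b \<cdot>\<^sub>v y)"
    using A x y unfolding pos_semidef_mat_def bf_def by auto
  ultimately show ?thesis using bf_quad[OF A(1) _ x y] by simp
qed

lemma pd_psd: assumes "pos_def_mat A" shows "pos_semidef_mat A"
  unfolding pos_semidef_mat_def
proof (intro conjI ballI)
  show "sym_mat A" using assms unfolding pos_def_mat_def by auto
  fix x :: "real vec" assume x: "x \<in> carrier_vec (dim_row A)"
  show "0 \<le> x \<bullet> (A *\<^sub>v x)"
  proof (cases "x = 0\<^sub>v (dim_row A)")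
    case True
    have "x \<bullet> (A *\<^sub>v x) = 0" unfolding True
      unfolding scalar_prod_def by simp
    thus ?thesis by simp
  next
    case False thus ?thesis using assms x unfolding pos_def_mat_def by (auto intro: less_imp_le)
  qed
qed

lemma psd_amgm: assumes A: "A \<in> carrier_mat m m" "pos_semidef_mat A" and x: "x \<in> carrier_vec m" and y: "y \<in> carrier_vec m"
  and s: "s > 0"
  shows "-2 * bf A x y \<le> s * bf A x x + bf A y y / s"
proof -
  have "0 \<le> s*s*bf A x x + 2*s*1*bf A x y + 1*1*bf A y y" by (rule psd_quad[OF A x y])
  hence "0 \<le> (s*s*bf A x x + 2*s*bf A x y + bf A y y) / s" using s by simp
  also have "\<dots> = s * bf A x x + 2 * bf A x y + bf A y y / s" using s by (simp add: field_simps)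
  finally show ?thesis by simp
qed

lemma pd_inv: assumes M: "M \<in> carrier_mat m m" "pos_def_mat M"
  shows "\<exists>N \<in> carrier_mat m m. M * N = 1\<^sub>m m \<and> N * M = 1\<^sub>m m"
proof -
  have "det M \<noteq> 0"
  proof
    assume "det M = 0"
    then obtain v where v: "v \<in> carrier_vec m" "v \<noteq> 0\<^sub>v m" "M *\<^sub>v v = 0\<^sub>v m"
      using det_0_iff_vec_prod_zero_field[OF M(1)] by auto
    hence "v \<bullet> (M *\<^sub>v v) > 0" using M unfolding pos_def_mat_def by auto
    thus False using v by simp
  qed
  from det_non_zero_imp_unit[OF M(1) this, of "()"]
  show ?thesis unfolding Units_def ring_mat_def by auto
qed

lemma pd_coercive: assumes M: "M \<in> carrier_mat m m" "pos_def_mat M"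
  shows "\<exists>c>0. \<forall>x \<in> carrier_vec m. x \<bullet> x \<le> c * bf M x x"
proof -
  obtain N where N: "N \<in> carrier_mat m m" "M * N = 1\<^sub>m m" using pd_inv[OF M] by auto
  define c0 where "c0 = (\<Sum>j<m. \<Sum>k<m. \<bar>N $$ (j,k)\<bar>)"
  have c0: "c0 \<ge> 0" unfolding c0_def by (auto intro: sum_nonneg)
  define c where "c = c0 + 1"
  have c: "c > 0" using c0 unfolding c_def by simp
  have psd: "pos_semidef_mat M" using pd_psd M by auto
  show ?thesis
  proof (intro exI[of _ c] conjI ballI c)
    fix x :: "real vec" assume x: "x \<in> carrier_vec m"
    define y where "y = N *\<^sub>v x"
    have y: "y \<in> carrier_vec m" using N x unfolding y_def by auto
    have My: "M *\<^sub>v y = x" unfolding y_def using N M x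
      by (metis assoc_mult_mat_vec one_mult_mat_vec)
    have xx: "x \<bullet> x = bf M x y" unfolding bf_def My ..
    have yy: "bf M y y = bf N x x" unfolding bf_def My using x y
      by (metis comm_scalar_prod y_def)
    have "\<bar>bf N x x\<bar> \<le> c0 * (x \<bullet> x)" unfolding c0_def by (rule bf_abs_bound[OF N(1) x])
    hence yy': "bf M y y \<le> c0 * (x \<bullet> x)" using yy by simp
    have "-2 * bf M x (-1 \<cdot>\<^sub>v y) \<le> c * bf M x x + bf M (-1 \<cdot>\<^sub>v y) (-1 \<cdot>\<^sub>v y) / c"
      by (rule psd_amgm[OF M(1) psd x _ c], insert y, auto)
    hence "2 * (x \<bullet> x) \<le> c * bf M x x + bf M y y / c"
      using x y xx by (simp add: bf_smult_l[OF M(1)] bf_smult_r[OF M(1)])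
    moreover have "bf M y y / c \<le> x \<bullet> x"
    proof -
      have "bf M y y \<le> c * (x \<bullet> x)" using yy' dot_self_nonneg[of x] unfolding c_def by (smt (verit) mult_right_mono)
      thus ?thesis using c by (simp add: divide_le_eq mult.commute)
    qed
    ultimately show "x \<bullet> x \<le> c * bf M x x" by linarith
  qed
qed


lemma cont_qf: "continuous_map (product_topology (\<lambda>_. euclideanreal) {..<m}) euclideanreal
   (\<lambda>f. \<Sum>j<m. \<Sum>k<m. f j * (A::real mat) $$ (j,k) * f k)"
  by (intro continuous_map_sum continuous_map_real_mult continuous_map_const[THEN iffD2] 
       continuous_map_product_projection, auto)


lemma gen_eig_finite: assumes M: "M \<in> carrier_mat m m" "pos_def_mat M" and K: "K \<in> carrier_mat m m"
  shows "finite (gen_eigenvalues K M)"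
proof -
  obtain N where N: "N \<in> carrier_mat m m" "N * M = 1\<^sub>m m" using pd_inv[OF M] by auto
  have NK: "N * K \<in> carrier_mat m m" using N K by auto
  have "gen_eigenvalues K M \<subseteq> {k. poly (char_poly (N * K)) k = 0}"
  proof
    fix w assume "w \<in> gen_eigenvalues K M"
    then obtain phi where phi: "phi \<in> carrier_vec m" "phi \<noteq> 0\<^sub>v m" "K *\<^sub>v phi = w \<cdot>\<^sub>v (M *\<^sub>v phi)"
      unfolding gen_eigenvalues_def using K by auto
    have "(N * K) *\<^sub>v phi = N *\<^sub>v (w \<cdot>\<^sub>v (M *\<^sub>v phi))" using N K phi by (simp add: phi(3)[symmetric])
    also have "\<dots> = w \<cdot>\<^sub>v (N *\<^sub>v (M *\<^sub>v phi))" using N M phi by (simp add: mult_mat_vec)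
    also have "N *\<^sub>v (M *\<^sub>v phi) = phi" using assoc_mult_mat_vec[OF N(1) M(1) phi(1)] N(2) phi by simp
    finally have "eigenvalue (N * K) w" unfolding Char_Poly.eigenvalue_def eigenvector_def using phi NK N(1) by auto
    thus "w \<in> {k. poly (char_poly (N * K)) k = 0}" using eigenvalue_root_char_poly[OF NK] by auto
  qed
  moreover have "char_poly (N * K) \<noteq> 0" using degree_monic_char_poly[OF NK] by auto
  ultimately show ?thesis using poly_roots_finite finite_subset by blast
qed

lemma quad_zero_lemma: assumes a: "(a::real) \<ge> 0" and h: "\<And>t. 0 \<le> 2*t*b + t*t*a" shows "b = 0"
proof -
  define t where "t = -b/(a+1)"
  have "0 \<le> 2*t*b + t*t*a" by (rule h)
  hence pos: "0 \<le> (a+1)*(a+1)*(2*t*b + t*t*a)" using a by simp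
  have ta: "t*(a+1) = -b" unfolding t_def using a by simp
  have "(a+1)*(a+1)*(2*t*b + t*t*a) = 2*b*(a+1)*(t*(a+1)) + (t*(a+1))*(t*(a+1))*a"
    by (simp add: algebra_simps)
  also have "\<dots> = -(b*b*(a+2))" unfolding ta by (simp add: algebra_simps)
  finally have "b*b*(a+2) \<le> 0" using pos by linarith
  moreover have "b*b \<ge> 0" by simp
  moreover have "0 \<le> b*b*a" using a by simp
  moreover have "b*b*(a+2) = b*b*a + 2*(b*b)" by (simp add: algebra_simps)
  ultimately have "b*b \<le> 0" by linarith
  thus ?thesis by (smt (verit) mult_pos_pos mult_neg_neg)
qed

lemma bf_zero: assumes "A \<in> carrier_mat m m" shows "bf A (0\<^sub>v m) (0\<^sub>v m) = 0"
  unfolding bf_def by (rule scalar_prod_left_zero, insert assms, auto)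

lemma dot_self_zero: assumes "(w::real vec) \<in> carrier_vec m" "w \<bullet> w = 0" shows "w = 0\<^sub>v m"
proof (rule eq_vecI)
  show "dim_vec w = dim_vec (0\<^sub>v m)" using assms by simp
  fix j assume j: "j < dim_vec (0\<^sub>v m)"
  have "w $ j * w $ j \<le> 0" using comp_sq_le[OF assms(1), of j] j assms by simp
  hence "w $ j = 0" by (smt (verit) mult_pos_pos mult_neg_neg)
  thus "w $ j = 0\<^sub>v m $ j" using j by simp
qed

lemma rayleigh_max:
  assumes M: "M \<in> carrier_mat m m" "pos_def_mat M" and K: "K \<in> carrier_mat m m" "pos_semidef_mat K"
    and m: "m > 0"
  shows "\<exists>w0 \<in> gen_eigenvalues K M. \<forall>x \<in> carrier_vec m. bf K x x \<le> w0 * bf M x x"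
proof -
  obtain c where c: "c > 0" "\<And>x. x \<in> carrier_vec m \<Longrightarrow> x \<bullet> x \<le> c * bf M x x"
    using pd_coercive[OF M] by auto
  define R where "R = c + 1"
  define X where "X = product_topology (\<lambda>_. euclideanreal) {..<m}"
  define qM where "qM = (\<lambda>f. \<Sum>j<m. \<Sum>k<m. f j * M $$ (j,k) * f k)"
  define qK where "qK = (\<lambda>f. \<Sum>j<m. \<Sum>k<m. f j * K $$ (j,k) * f k)"
  define Cube where "Cube = PiE {..<m} (\<lambda>_. {-R..R})"
  define T where "T = {f \<in> topspace X. qM f \<in> {1}} \<inter> Cube"
  have qM_bf: "\<And>f. qM f = bf M (vec m f) (vec m f)" unfolding qM_def
    by (subst bf_sum[OF M(1)], auto)
  have qK_bf: "\<And>f. qK f = bf K (vec m f) (vec m f)" unfolding qK_def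
    by (subst bf_sum[OF K(1)], auto)
  have cM: "continuous_map X euclideanreal qM" unfolding X_def qM_def by (rule cont_qf)
  have cK: "continuous_map X euclideanreal qK" unfolding X_def qK_def by (rule cont_qf)
  have "closedin X {f \<in> topspace X. qM f \<in> {1}}"
    by (rule closedin_continuous_map_preimage[OF cM], simp)
  moreover have "compactin X Cube" unfolding X_def Cube_def
    by (subst compactin_PiE) simp
  ultimately have "compactin X T" unfolding T_def by (rule closed_Int_compactin)
  hence "compactin euclideanreal (qK ` T)" by (rule image_compactin[OF _ cK])
  hence cpt: "compact (qK ` T)" by simp
  have inT: "restrict (\<lambda>j. x $ j) {..<m} \<in> T \<and> vec m (restrict (\<lambda>j. x $ j) {..<m}) = x"
    if x: "x \<in> carrier_vec m" "bf M x x = 1" for x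
  proof -
    let ?f = "restrict (\<lambda>j. x $ j) {..<m}"
    have vx: "vec m ?f = x" using x by (intro eq_vecI, auto)
    have "?f \<in> Cube" unfolding Cube_def
    proof (rule PiE_I)
      fix j assume j: "j \<in> {..<m}"
      have "x $ j * x $ j \<le> c" using comp_sq_le[OF x(1), of j] c(2)[OF x(1)] x(2) j by auto
      have "\<bar>x $ j\<bar> \<le> R"
      proof (rule ccontr)
        assume "\<not> \<bar>x $ j\<bar> \<le> R"
        hence lt: "R < \<bar>x $ j\<bar>" by simp
        have R1: "R \<ge> 1" "R > c" unfolding R_def using c by auto
        have "R * R < \<bar>x $ j\<bar> * \<bar>x $ j\<bar>" using lt R1 by (intro mult_strict_mono, auto)
        moreover have "\<bar>x $ j\<bar> * \<bar>x $ j\<bar> = x $ j * x $ j" by (rule abs_mult_self_eq)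
        moreover have "R \<le> R * R" using R1 by simp
        ultimately show False using \<open>x $ j * x $ j \<le> c\<close> R1 by linarith
      qed
      thus "?f j \<in> {-R..R}" using j by auto
    qed auto
    moreover have "?f \<in> topspace X" unfolding X_def by auto
    moreover have "qM ?f = 1" unfolding qM_bf vx using x by simp
    ultimately show ?thesis unfolding T_def using vx by auto
  qed
  have ne: "qK ` T \<noteq> {}"
  proof -
    define e where "e = (unit_vec m 0 :: real vec)"
    have e: "e \<in> carrier_vec m" "e \<noteq> 0\<^sub>v m" unfolding e_def using m
      by (auto simp: unit_vec_def vec_eq_iff)
    hence E: "bf M e e > 0" using M unfolding pos_def_mat_def bf_def by auto
    define y where "y = (1 / sqrt (bf M e e)) \<cdot>\<^sub>v e"
    have "bf M y y = 1" unfolding y_def using e E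
      by (simp add: bf_smult_l[OF M(1)] bf_smult_r[OF M(1)])
    moreover have "y \<in> carrier_vec m" using e unfolding y_def by auto
    ultimately show ?thesis using inT by blast
  qed
  obtain s where s: "s \<in> qK ` T" "\<And>t. t \<in> qK ` T \<Longrightarrow> t \<le> s"
    using compact_attains_sup[OF cpt ne] by auto
  obtain f0 where f0: "f0 \<in> T" "s = qK f0" using s(1) by auto
  define x0 where "x0 = vec m f0"
  have x0: "x0 \<in> carrier_vec m" "bf M x0 x0 = 1" "bf K x0 x0 = s"
    using f0 qM_bf qK_bf unfolding x0_def T_def by auto
  have unit_le: "bf K x x \<le> s" if "x \<in> carrier_vec m" "bf M x x = 1" for x
  proof -
    from inT[OF that] have "qK (restrict (\<lambda>j. x $ j) {..<m}) \<le> s" using s(2) by auto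
    thus ?thesis using inT[OF that] qK_bf by metis
  qed
  have all_le: "bf K x x \<le> s * bf M x x" if x: "x \<in> carrier_vec m" for x
  proof (cases "x = 0\<^sub>v m")
    case True thus ?thesis by (simp add: bf_zero[OF M(1)] bf_zero[OF K(1)])
  next
    case False
    hence E: "bf M x x > 0" using M x unfolding pos_def_mat_def bf_def by auto
    define t where "t = 1 / sqrt (bf M x x)"
    have tt: "t * t = 1 / bf M x x" unfolding t_def using E by (simp add: real_sqrt_mult[symmetric])
    have sc: "bf A (t \<cdot>\<^sub>v x) (t \<cdot>\<^sub>v x) = (t * t) * bf A x x" if "A \<in> carrier_mat m m" for A
    proof -
      have "bf A (t \<cdot>\<^sub>v x) (t \<cdot>\<^sub>v x) = t * bf A x (t \<cdot>\<^sub>v x)"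
        by (rule bf_smult_l[OF that x], insert x, auto)
      also have "bf A x (t \<cdot>\<^sub>v x) = t * bf A x x" by (rule bf_smult_r[OF that x x])
      finally show ?thesis by simp
    qed
    have "bf M (t \<cdot>\<^sub>v x) (t \<cdot>\<^sub>v x) = 1" using sc[OF M(1)] tt E by simp
    hence "bf K (t \<cdot>\<^sub>v x) (t \<cdot>\<^sub>v x) \<le> s" using x by (intro unit_le, auto)
    hence "t * t * bf K x x \<le> s" using sc[OF K(1)] by simp
    hence "bf K x x / bf M x x \<le> s" using tt by (simp add: divide_inverse mult.commute)
    thus ?thesis using E by (simp add: divide_le_eq)
  qed
  define w where "w = s \<cdot>\<^sub>v (M *\<^sub>v x0) - K *\<^sub>v x0"
  have w: "w \<in> carrier_vec m" unfolding w_def using M K x0 by auto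
  have symM: "sym_mat M" and symK: "sym_mat K"
    using M K unfolding pos_def_mat_def pos_semidef_mat_def by auto
  define b where "b = s * bf M x0 w - bf K x0 w"
  have "b = 0"
  proof (rule quad_zero_lemma)
    show "0 \<le> s * bf M w w - bf K w w" using all_le[OF w] by simp
    fix t
    have "0 \<le> s * bf M (1 \<cdot>\<^sub>v x0 + t \<cdot>\<^sub>v w) (1 \<cdot>\<^sub>v x0 + t \<cdot>\<^sub>v w)
              - bf K (1 \<cdot>\<^sub>v x0 + t \<cdot>\<^sub>v w) (1 \<cdot>\<^sub>v x0 + t \<cdot>\<^sub>v w)"
      using all_le[of "1 \<cdot>\<^sub>v x0 + t \<cdot>\<^sub>v w"] x0 w by simp
    also have "\<dots> = s * (1*1*bf M x0 x0 + 2*1*t*bf M x0 w + t*t*bf M w w)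
                 - (1*1*bf K x0 x0 + 2*1*t*bf K x0 w + t*t*bf K w w)"
      by (simp only: bf_quad[OF M(1) symM x0(1) w] bf_quad[OF K(1) symK x0(1) w])
    also have "\<dots> = 2*t*b + t*t*(s * bf M w w - bf K w w)"
      unfolding b_def using x0 by (simp add: algebra_simps)
    finally show "0 \<le> 2*t*b + t*t*(s * bf M w w - bf K w w)" .
  qed
  moreover have "b = w \<bullet> w"
  proof -
    have "b = s * (w \<bullet> (M *\<^sub>v x0)) - w \<bullet> (K *\<^sub>v x0)"
      unfolding b_def using bf_sym[OF M(1) symM x0(1) w] bf_sym[OF K(1) symK x0(1) w]
      by (simp add: bf_def)
    also have "\<dots> = w \<bullet> (s \<cdot>\<^sub>v (M *\<^sub>v x0)) - w \<bullet> (K *\<^sub>v x0)"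
      using w M K x0 by simp
    also have "\<dots> = w \<bullet> w" unfolding w_def[of] 
      by (rule scalar_prod_minus_distrib[symmetric, of _ m], insert w M K x0, auto simp: w_def)
    finally show ?thesis .
  qed
  ultimately have "w = 0\<^sub>v m" using dot_self_zero[OF w] by simp
  have eig: "K *\<^sub>v x0 = s \<cdot>\<^sub>v (M *\<^sub>v x0)"
  proof (rule eq_vecI)
    show "dim_vec (K *\<^sub>v x0) = dim_vec (s \<cdot>\<^sub>v (M *\<^sub>v x0))" using M K by simp
    fix j assume j: "j < dim_vec (s \<cdot>\<^sub>v (M *\<^sub>v x0))"
    have "w $ j = 0" using \<open>w = 0\<^sub>v m\<close> j M by simp
    thus "(K *\<^sub>v x0) $ j = (s \<cdot>\<^sub>v (M *\<^sub>v x0)) $ j" unfolding w_def using j M K x0 by simp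
  qed
  have "x0 \<noteq> 0\<^sub>v m" using x0(2) bf_zero[OF M(1)] by auto
  hence "s \<in> gen_eigenvalues K M" unfolding gen_eigenvalues_def using K x0 eig by auto
  thus ?thesis using all_le by blast
qed


lemma bf_dim0: assumes "A \<in> carrier_mat 0 0" "x \<in> carrier_vec 0" shows "bf A x x = 0"
  using assms unfolding bf_def scalar_prod_def by simp

lemma omega_bound:
  assumes M: "M \<in> carrier_mat m m" "pos_def_mat M" and K: "K \<in> carrier_mat m m" "pos_semidef_mat K"
    and x: "x \<in> carrier_vec m"
  shows "bf K x x \<le> omega_max K M * bf M x x"
proof (cases "m = 0")
  case True thus ?thesis using bf_dim0 M K x by auto
next
  case False
  obtain w0 where w0: "w0 \<in> gen_eigenvalues K M" "\<And>x. x \<in> carrier_vec m \<Longrightarrow> bf K x x \<le> w0 * bf M x x"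
    using rayleigh_max[OF M K] False by auto
  have "w0 \<le> omega_max K M" unfolding omega_max_def
    by (rule Max_ge[OF gen_eig_finite[OF M K(1)] w0(1)])
  moreover have "bf M x x \<ge> 0" using pd_psd[OF M(2)] M x unfolding pos_semidef_mat_def bf_def by auto
  ultimately have "w0 * bf M x x \<le> omega_max K M * bf M x x" by (rule mult_right_mono)
  thus ?thesis using w0(2)[OF x] by linarith
qed

lemma step_ids:
  fixes M K C :: "real mat" and lam d d' v :: "real vec"
  assumes M: "M \<in> carrier_mat m m" "sym_mat M" and K: "K \<in> carrier_mat m m" "sym_mat K"
    and C: "C \<in> carrier_mat p m" and lam: "lam \<in> carrier_vec p"
    and d: "d \<in> carrier_vec m" and v: "v \<in> carrier_vec m"
    and upd: "d' = d + dt \<cdot>\<^sub>v v" and dt: "dt \<noteq> 0"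
    and eq: "M *\<^sub>v v + K *\<^sub>v ((1 - g) \<cdot>\<^sub>v d + g \<cdot>\<^sub>v d') = transpose_mat C *\<^sub>v lam"
  shows "bf M ((1 - g) \<cdot>\<^sub>v d + g \<cdot>\<^sub>v d') v + bf K ((1 - g) \<cdot>\<^sub>v d + g \<cdot>\<^sub>v d') ((1 - g) \<cdot>\<^sub>v d + g \<cdot>\<^sub>v d')
           = (1 - g) * (lam \<bullet> (C *\<^sub>v d)) + g * (lam \<bullet> (C *\<^sub>v d'))"
    and "dt * (bf M v v + bf K v ((1 - g) \<cdot>\<^sub>v d + g \<cdot>\<^sub>v d')) = lam \<bullet> (C *\<^sub>v d') - lam \<bullet> (C *\<^sub>v d)"
    and "bf M ((1 - g) \<cdot>\<^sub>v d + g \<cdot>\<^sub>v d') v = (bf M d' d' - bf M d d) / (2 * dt) + (g - 1/2) * dt * bf M v v"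
proof -
  define th where "th = (1 - g) \<cdot>\<^sub>v d + g \<cdot>\<^sub>v d'"
  have d': "d' \<in> carrier_vec m" using upd d v by auto
  have th: "th \<in> carrier_vec m" unfolding th_def using d d' by auto
  have key: "y \<bullet> (M *\<^sub>v v) + y \<bullet> (K *\<^sub>v th) = lam \<bullet> (C *\<^sub>v y)" if y: "y \<in> carrier_vec m" for y
  proof -
    have "y \<bullet> (M *\<^sub>v v) + y \<bullet> (K *\<^sub>v th) = y \<bullet> (M *\<^sub>v v + K *\<^sub>v th)"
      by (rule scalar_prod_add_distrib[symmetric, of _ m], insert y M K v th, auto)
    also have "\<dots> = y \<bullet> (transpose_mat C *\<^sub>v lam)" using eq unfolding th_def by simp
    also have "\<dots> = (transpose_mat C *\<^sub>v lam) \<bullet> y" by (rule comm_scalar_prod[of _ m], insert y C lam, auto)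
    also have "\<dots> = lam \<bullet> (C *\<^sub>v y)" by (rule transpose_vec_mult_scalar[OF C y lam])
    finally show ?thesis .
  qed
  have Clin: "lam \<bullet> (C *\<^sub>v (a \<cdot>\<^sub>v x + b \<cdot>\<^sub>v y)) = a * (lam \<bullet> (C *\<^sub>v x)) + b * (lam \<bullet> (C *\<^sub>v y))"
    if "x \<in> carrier_vec m" "y \<in> carrier_vec m" for a b x y
  proof -
    have "C *\<^sub>v (a \<cdot>\<^sub>v x + b \<cdot>\<^sub>v y) = a \<cdot>\<^sub>v (C *\<^sub>v x) + b \<cdot>\<^sub>v (C *\<^sub>v y)"
      using that C by (simp add: mult_add_distrib_mat_vec[OF C] mult_mat_vec[OF C])
    thus ?thesis using that C lam by (simp add: scalar_prod_add_distrib[of _ p])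
  qed
  show "bf M th v + bf K th th = (1 - g) * (lam \<bullet> (C *\<^sub>v d)) + g * (lam \<bullet> (C *\<^sub>v d'))"
    unfolding bf_def using key[OF th] Clin[OF d d'] unfolding th_def by simp
  have "lam \<bullet> (C *\<^sub>v d') = 1 * (lam \<bullet> (C *\<^sub>v d)) + dt * (lam \<bullet> (C *\<^sub>v v))"
    using Clin[OF d v, of 1 dt] upd by simp
  thus "dt * (bf M v v + bf K v th) = lam \<bullet> (C *\<^sub>v d') - lam \<bullet> (C *\<^sub>v d)"
    unfolding bf_def using key[OF v] by (simp add: algebra_simps)
  have th2: "th = 1 \<cdot>\<^sub>v d + (g * dt) \<cdot>\<^sub>v v" unfolding th_def upd
    by (rule eq_vecI, insert d v, auto simp: algebra_simps)
  have d2: "d' = 1 \<cdot>\<^sub>v d + dt \<cdot>\<^sub>v v" unfolding upd by simp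
  have "bf M th v = bf M d v + g * dt * bf M v v" unfolding th2 using d v
    by (simp add: bf_add_l[OF M(1)] bf_smult_l[OF M(1)])
  moreover have "bf M d' d' = bf M d d + 2 * dt * bf M d v + dt * dt * bf M v v"
    unfolding d2 bf_quad[OF M d v] by simp
  ultimately show "bf M th v = (bf M d' d' - bf M d d) / (2 * dt) + (g - 1/2) * dt * bf M v v"
    using dt by (simp add: field_simps)
qed


definition cb :: "nat \<Rightarrow> (nat \<Rightarrow> real vec) \<Rightarrow> bool" where
  "cb k x \<longleftrightarrow> (\<exists>B. \<forall>n j. j < k \<longrightarrow> \<bar>x n $ j\<bar> \<le> B)"

lemma cb_bseq: assumes c: "\<And>n. x n \<in> carrier_vec k" and b: "cb k x" shows "bounded_seq x"
proof -
  obtain B where B: "\<And>n j. j < k \<Longrightarrow> \<bar>x n $ j\<bar> \<le> B" using b unfolding cb_def by auto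
  show ?thesis unfolding bounded_seq_def
  proof (intro exI allI)
    fix n
    have "x n \<bullet> x n = (\<Sum>j<k. x n $ j * x n $ j)" by (rule dot_self_sum[OF c])
    also have "\<dots> \<le> (\<Sum>j<k. B * B)"
    proof (rule sum_mono)
      fix j assume "j \<in> {..<k}"
      hence "\<bar>x n $ j\<bar> \<le> B" using B by auto
      hence "\<bar>x n $ j\<bar> * \<bar>x n $ j\<bar> \<le> B * B" by (intro mult_mono, auto)
      thus "x n $ j * x n $ j \<le> B * B" by (simp add: abs_mult_self_eq)
    qed
    finally have "vnorm (x n) \<le> sqrt (real k * (B * B))" unfolding vnorm_def by simp
    thus "vnorm (x n) < sqrt (real k * (B * B)) + 1" by simp
  qed
qed

lemma cb_of_dot: assumes c: "\<And>n. x n \<in> carrier_vec k" and b: "\<And>n. x n \<bullet> x n \<le> B" shows "cb k x"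
  unfolding cb_def
proof (intro exI allI impI)
  fix n j assume j: "j < k"
  have h: "x n $ j * x n $ j \<le> B" using comp_sq_le[OF c[of n] j] b[of n] by linarith
  show "\<bar>x n $ j\<bar> \<le> 1 + \<bar>B\<bar>"
  proof (rule ccontr)
    assume "\<not> ?thesis"
    hence lt: "1 + \<bar>B\<bar> < \<bar>x n $ j\<bar>" by simp
    have "(1 + \<bar>B\<bar>) * 1 \<le> \<bar>x n $ j\<bar> * \<bar>x n $ j\<bar>" using lt by (intro mult_mono, auto)
    thus False using h lt by (simp add: abs_mult_self_eq)
  qed
qed

lemma cb_shift: assumes "cb k (\<lambda>n. x (Suc n))" shows "cb k x"
proof -
  obtain B where B: "\<And>n j. j < k \<Longrightarrow> \<bar>x (Suc n) $ j\<bar> \<le> B" using assms unfolding cb_def by auto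
  show ?thesis unfolding cb_def
  proof (intro exI allI impI)
    fix n j assume j: "j < k"
    have s: "\<bar>x 0 $ j\<bar> \<le> (\<Sum>l<k. \<bar>x 0 $ l\<bar>)" by (rule member_le_sum, insert j, auto)
    have s0: "0 \<le> (\<Sum>l<k. \<bar>x 0 $ l\<bar>)" by (auto intro: sum_nonneg)
    show "\<bar>x n $ j\<bar> \<le> \<bar>B\<bar> + (\<Sum>l<k. \<bar>x 0 $ l\<bar>)"
    proof (cases n)
      case 0 thus ?thesis using s by simp
    next
      case (Suc n')
      from B[OF j, of n'] s0 abs_ge_self[of B] have "\<bar>x (Suc n') $ j\<bar> \<le> \<bar>B\<bar> + (\<Sum>l<k. \<bar>x 0 $ l\<bar>)" by linarith
      thus ?thesis using Suc by simp
    qed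
  qed
qed

lemma cb_tail: "cb k x \<Longrightarrow> cb k (\<lambda>n. x (Suc n))" unfolding cb_def by auto

lemma cb_lin: assumes "cb k x" "cb k y" and c: "\<And>n j. j < k \<Longrightarrow> z n $ j = a * x n $ j + b * y n $ j"
  shows "cb k z"
proof -
  obtain B1 where B1: "\<And>n j. j < k \<Longrightarrow> \<bar>x n $ j\<bar> \<le> B1" using assms unfolding cb_def by auto
  obtain B2 where B2: "\<And>n j. j < k \<Longrightarrow> \<bar>y n $ j\<bar> \<le> B2" using assms unfolding cb_def by auto
  show ?thesis unfolding cb_def
  proof (intro exI allI impI)
    fix n j assume j: "j < k"
    have "\<bar>z n $ j\<bar> \<le> \<bar>a\<bar> * \<bar>x n $ j\<bar> + \<bar>b\<bar> * \<bar>y n $ j\<bar>" unfolding c[OF j]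
      by (metis abs_mult abs_triangle_ineq)
    also have "\<dots> \<le> \<bar>a\<bar> * B1 + \<bar>b\<bar> * B2" using B1[OF j] B2[OF j]
      by (intro add_mono mult_left_mono, auto)
    finally show "\<bar>z n $ j\<bar> \<le> \<bar>a\<bar> * B1 + \<bar>b\<bar> * B2" .
  qed
qed

lemma cb_mat: assumes A: "A \<in> carrier_mat k l" and x: "\<And>n. x n \<in> carrier_vec l" and b: "cb l x"
  shows "cb k (\<lambda>n. A *\<^sub>v x n)"
proof -
  obtain B where B: "\<And>n j. j < l \<Longrightarrow> \<bar>x n $ j\<bar> \<le> B" using b unfolding cb_def by auto
  show ?thesis unfolding cb_def
  proof (intro exI allI impI)
    fix n j assume j: "j < k"
    have "(A *\<^sub>v x n) $ j = (\<Sum>c<l. A $$ (j,c) * x n $ c)"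
      using A x[of n] j by (simp add: scalar_prod_def atLeast0LessThan)
    hence "\<bar>(A *\<^sub>v x n) $ j\<bar> \<le> (\<Sum>c<l. \<bar>A $$ (j,c) * x n $ c\<bar>)" by (simp add: sum_abs)
    also have "\<dots> \<le> (\<Sum>c<l. \<bar>A $$ (j,c)\<bar> * B)"
      by (rule sum_mono, simp add: abs_mult, rule mult_left_mono, insert B, auto)
    also have "\<dots> \<le> (\<Sum>j<k. \<Sum>c<l. \<bar>A $$ (j,c)\<bar> * \<bar>B\<bar>)"
    proof -
      have "(\<Sum>c<l. \<bar>A $$ (j,c)\<bar> * B) \<le> (\<Sum>c<l. \<bar>A $$ (j,c)\<bar> * \<bar>B\<bar>)"
        by (rule sum_mono, rule mult_left_mono, auto)
      also have "\<dots> \<le> (\<Sum>j<k. \<Sum>c<l. \<bar>A $$ (j,c)\<bar> * \<bar>B\<bar>)"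
        by (rule member_le_sum[where f="\<lambda>j. \<Sum>c<l. \<bar>A $$ (j,c)\<bar> * \<bar>B\<bar>"], insert j, auto intro: sum_nonneg)
      finally show ?thesis .
    qed
    finally show "\<bar>(A *\<^sub>v x n) $ j\<bar> \<le> (\<Sum>j<k. \<Sum>c<l. \<bar>A $$ (j,c)\<bar> * \<bar>B\<bar>)" .
  qed
qed

lemma dotp: "(y::real vec) \<in> carrier_vec p \<Longrightarrow> lam \<bullet> y = (\<Sum>j<p. lam $ j * y $ j)"
  unfolding scalar_prod_def by (simp add: atLeast0LessThan)

lemma constr_sum:
  fixes C :: "nat \<Rightarrow> real mat" and x :: "nat \<Rightarrow> real vec"
  assumes C: "\<And>i. i < S \<Longrightarrow> C i \<in> carrier_mat p (m i)" and x: "\<And>i. i < S \<Longrightarrow> x i \<in> carrier_vec (m i)"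
    and s: "finsum_vec TYPE(real) p (\<lambda>i. C i *\<^sub>v x i) {..<S} = 0\<^sub>v p"
    and lam: "lam \<in> carrier_vec p"
  shows "(\<Sum>i<S. lam \<bullet> (C i *\<^sub>v x i)) = 0"
proof -
  have f: "(\<lambda>i. C i *\<^sub>v x i) \<in> {..<S} \<rightarrow> carrier_vec p"
  proof
    fix i assume "i \<in> {..<S}"
    hence "C i \<in> carrier_mat p (m i)" "x i \<in> carrier_vec (m i)" using C x by auto
    thus "C i *\<^sub>v x i \<in> carrier_vec p" by auto
  qed
  have comp: "(\<Sum>i<S. (C i *\<^sub>v x i) $ j) = 0" if j: "j < p" for j
    using index_finsum_vec[OF _ j f] s j by simp
  have "(\<Sum>i<S. lam \<bullet> (C i *\<^sub>v x i)) = (\<Sum>i<S. \<Sum>j<p. lam $ j * (C i *\<^sub>v x i) $ j)"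
    by (rule sum.cong[OF refl], rule dotp, insert f, auto)
  also have "\<dots> = (\<Sum>j<p. lam $ j * (\<Sum>i<S. (C i *\<^sub>v x i) $ j))"
    by (simp add: sum_distrib_left sum.swap[of _ "{..<S}"])
  also have "\<dots> = 0" using comp by simp
  finally show ?thesis .
qed

lemma lam_bound:
  fixes C :: "nat \<Rightarrow> real mat" and lam :: "nat \<Rightarrow> real vec"
  assumes C: "\<And>i. i < S \<Longrightarrow> C i \<in> carrier_mat p (m i)"
    and r: "vec_space.rank p (hblock p S C) = p"
    and lam: "\<And>n. lam n \<in> carrier_vec p"
    and b: "\<And>i. i < S \<Longrightarrow> cb (m i) (\<lambda>n. transpose_mat (C i) *\<^sub>v lam n)"
  shows "cb p lam"
proof -
  define L where "L = concat (map (\<lambda>i. cols (C i)) [0..<S])"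
  have Lc: "set L \<subseteq> carrier_vec p"
  proof
    fix u assume "u \<in> set L"
    then obtain i where i: "i < S" "u \<in> set (cols (C i))" unfolding L_def by auto
    thus "u \<in> carrier_vec p" using cols_dim[of "C i"] C[OF i(1)] by auto
  qed
  have H: "hblock p S C \<in> carrier_mat p (length L)" unfolding hblock_def L_def by auto
  have colsH: "cols (hblock p S C) = L" unfolding hblock_def L_def[symmetric] using Lc
    by (simp add: cols_mat_of_cols)
  from b obtain Bf where Bf: "\<And>i n c. i < S \<Longrightarrow> c < m i \<Longrightarrow> \<bar>(transpose_mat (C i) *\<^sub>v lam n) $ c\<bar> \<le> Bf i"
    unfolding cb_def by metis
  define BT where "BT = (\<Sum>i<S. \<bar>Bf i\<bar>)"
  have uBT: "\<bar>u \<bullet> lam n\<bar> \<le> BT" if u: "u \<in> set L" for u n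
  proof -
    from u obtain i c where i: "i < S" and c': "c < dim_col (C i)" and uc: "u = col (C i) c"
      unfolding L_def by (auto simp: cols_def)
    have c: "c < m i" using c' C[OF i] by auto
    have "u \<bullet> lam n = (transpose_mat (C i) *\<^sub>v lam n) $ c" unfolding uc using C[OF i] c by simp
    hence "\<bar>u \<bullet> lam n\<bar> \<le> \<bar>Bf i\<bar>" using Bf[OF i c, of n] by simp
    also have "\<bar>Bf i\<bar> \<le> BT" unfolding BT_def by (rule member_le_sum[where f="\<lambda>i. \<bar>Bf i\<bar>"], insert i, auto)
    finally show ?thesis .
  qed
  have ex: "\<forall>k<p. \<exists>A a. finite A \<and> A \<subseteq> set L \<and> unit_vec p k = module.lincomb (module_vec TYPE(real) p) a A"
  proof (intro allI impI)
    fix k assume k: "k < p"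
    show "\<exists>A a. finite A \<and> A \<subseteq> set L \<and> unit_vec p k = module.lincomb (module_vec TYPE(real) p) a A"
      using vec_space.span_full[OF H r, of "unit_vec p k"] colsH by auto
  qed
  then obtain Af af where Af: "\<And>k. k < p \<Longrightarrow> finite (Af k) \<and> Af k \<subseteq> set L \<and>
      unit_vec p k = module.lincomb (module_vec TYPE(real) p) (af k) (Af k)"
    by metis
  show ?thesis unfolding cb_def
  proof (intro exI allI impI)
    fix n k assume k: "k < p"
    have AfL: "Af k \<subseteq> carrier_vec p" using Af[OF k] Lc by auto
    have "lam n $ k = unit_vec p k \<bullet> lam n" using scalar_prod_left_unit[OF lam[of n] k] by simp
    also have "\<dots> = (\<Sum>u\<in>Af k. af k u * (u \<bullet> lam n))"
      using Af[OF k] vec_space.lincomb_dot[OF _ AfL lam] by auto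
    finally have "\<bar>lam n $ k\<bar> \<le> (\<Sum>u\<in>Af k. \<bar>af k u\<bar> * \<bar>u \<bullet> lam n\<bar>)"
      by (simp add: sum_abs[THEN order.trans] abs_mult)
    also have "\<dots> \<le> (\<Sum>u\<in>Af k. \<bar>af k u\<bar> * BT)"
      by (rule sum_mono, rule mult_left_mono, insert uBT Af[OF k], auto)
    also have "\<dots> \<le> (\<Sum>k<p. \<Sum>u\<in>Af k. \<bar>af k u\<bar> * \<bar>BT\<bar>)"
    proof -
      have "(\<Sum>u\<in>Af k. \<bar>af k u\<bar> * BT) \<le> (\<Sum>u\<in>Af k. \<bar>af k u\<bar> * \<bar>BT\<bar>)"
        by (rule sum_mono, rule mult_left_mono, auto)
      also have "\<dots> \<le> (\<Sum>k<p. \<Sum>u\<in>Af k. \<bar>af k u\<bar> * \<bar>BT\<bar>)"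
        by (rule member_le_sum[where f="\<lambda>k. \<Sum>u\<in>Af k. \<bar>af k u\<bar> * \<bar>BT\<bar>"], insert k, auto intro: sum_nonneg)
      finally show ?thesis .
    qed
    finally show "\<bar>lam n $ k\<bar> \<le> (\<Sum>k<p. \<Sum>u\<in>Af k. \<bar>af k u\<bar> * \<bar>BT\<bar>)" .
  qed
qed


theorem mainTheorem3:
  fixes S p :: nat and m :: "nat \<Rightarrow> nat"
    and M K C :: "nat \<Rightarrow> real mat"
    and \<gamma> \<Delta>t :: real
    and d vg :: "nat \<Rightarrow> nat \<Rightarrow> real vec"
    and lg :: "nat \<Rightarrow> real vec"
    and v1 :: "nat \<Rightarrow> nat \<Rightarrow> real vec"
    and l1 :: "nat \<Rightarrow> real vec"
  assumes S_pos: "S \<ge> 1"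
    and M_car: "\<And>i. i < S \<Longrightarrow> M i \<in> carrier_mat (m i) (m i)"
    and K_car: "\<And>i. i < S \<Longrightarrow> K i \<in> carrier_mat (m i) (m i)"
    and C_car: "\<And>i. i < S \<Longrightarrow> C i \<in> carrier_mat p (m i)"
    and M_pd: "\<And>i. i < S \<Longrightarrow> pos_def_mat (M i)"
    and K_psd: "\<And>i. i < S \<Longrightarrow> pos_semidef_mat (K i)"
    and C_sb: "\<And>i. i < S \<Longrightarrow> signed_boolean_mat (C i)"
    and C_rank: "vec_space.rank p (hblock p S C) = p"
    and gamma: "0 < \<gamma>" "\<gamma> \<le> 1"
    and dt: "\<Delta>t > 0"
    and cfl: "\<gamma> < 1/2 \<Longrightarrow> \<forall>i < S. \<Delta>t * (1 - 2*\<gamma>) * omega_max (K i) (M i) < 2"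
    and d_car: "\<And>i n. i < S \<Longrightarrow> d i n \<in> carrier_vec (m i)"
    and vg_car: "\<And>i n. i < S \<Longrightarrow> vg i n \<in> carrier_vec (m i)"
    and lg_car: "\<And>n. lg n \<in> carrier_vec p"
    and eq_motion: "\<And>i n. i < S \<Longrightarrow>
        M i *\<^sub>v vg i n + K i *\<^sub>v ((1 - \<gamma>) \<cdot>\<^sub>v d i n + \<gamma> \<cdot>\<^sub>v d i (Suc n))
          = transpose_mat (C i) *\<^sub>v lg n"
    and eq_update: "\<And>i n. i < S \<Longrightarrow> d i (Suc n) = d i n + \<Delta>t \<cdot>\<^sub>v vg i n"
    and eq_constr: "\<And>n. finsum_vec TYPE(real) p (\<lambda>i. C i *\<^sub>v d i (Suc n)) {..<S} = 0\<^sub>v p"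
    and v1_def: "\<And>i n. v1 i n = \<gamma> \<cdot>\<^sub>v vg i n + (1 - \<gamma>) \<cdot>\<^sub>v vg i (Suc n)"
    and l1_def: "\<And>n. l1 n = \<gamma> \<cdot>\<^sub>v lg n + (1 - \<gamma>) \<cdot>\<^sub>v lg (Suc n)"
  shows "(\<forall>i < S. bounded_seq (d i) \<and> bounded_seq (vg i) \<and> bounded_seq (v1 i))
         \<and> bounded_seq lg \<and> bounded_seq l1"
proof -
  define th where "th i n = (1 - \<gamma>) \<cdot>\<^sub>v d i n + \<gamma> \<cdot>\<^sub>v d i (Suc n)" for i n
  define E where "E i n = bf (M i) (d i n) (d i n)" for i n
  define V where "V i n = bf (M i) (vg i n) (vg i n)" for i n
  define Q where "Q i n = bf (K i) (th i n) (th i n)" for i n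
  define P where "P i n = bf (K i) (vg i n) (th i n)" for i n
  define R where "R i n = bf (K i) (vg i n) (vg i n)" for i n
  define T where "T i n = bf (M i) (th i n) (vg i n)" for i n
  define G where "G i k n = lg n \<bullet> (C i *\<^sub>v d i k)" for i k n
  have dtne: "\<Delta>t \<noteq> 0" using dt by simp
  have symM: "sym_mat (M i)" if "i < S" for i using M_pd[OF that] unfolding pos_def_mat_def by auto
  have symK: "sym_mat (K i)" if "i < S" for i using K_psd[OF that] unfolding pos_semidef_mat_def by auto
  have th_car: "th i n \<in> carrier_vec (m i)" if "i < S" for i n unfolding th_def using d_car[OF that] by auto
  have I1: "T i n + Q i n = (1 - \<gamma>) * G i n n + \<gamma> * G i (Suc n) n"
   and I2: "\<Delta>t * (V i n + P i n) = G i (Suc n) n - G i n n"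
   and I3: "T i n = (E i (Suc n) - E i n) / (2 * \<Delta>t) + (\<gamma> - 1/2) * \<Delta>t * V i n"
    if i: "i < S" for i n
    using step_ids[OF M_car[OF i] symM[OF i] K_car[OF i] symK[OF i] C_car[OF i] lg_car d_car[OF i]
        vg_car[OF i] eq_update[OF i] dtne eq_motion[OF i], of n]
    unfolding T_def Q_def G_def V_def P_def E_def th_def by auto
  have Gz: "(\<Sum>i<S. G i (Suc k) n) = 0" for k n
    unfolding G_def
    by (rule constr_sum[where S=S and C=C and p=p and x="\<lambda>i. d i (Suc k)" and m=m and lam="lg n",
          OF C_car _ eq_constr[of k] lg_car[of n]], auto intro: d_car)
  have Vnn: "V i n \<ge> 0" if "i < S" for i n
    using pd_psd[OF M_pd[OF that]] M_car[OF that] vg_car[OF that]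
    unfolding V_def bf_def pos_semidef_mat_def by auto
  have Qnn: "Q i n \<ge> 0" if "i < S" for i n
    using K_psd[OF that] K_car[OF that] th_car[OF that]
    unfolding Q_def bf_def pos_semidef_mat_def by auto
  have Enn: "E i n \<ge> 0" if "i < S" for i n
    using pd_psd[OF M_pd[OF that]] M_car[OF that] d_car[OF that]
    unfolding E_def bf_def pos_semidef_mat_def by auto
  have key: "0 \<le> (\<gamma> - 1/2) * \<Delta>t * (\<Sum>i<S. V i n) + (\<Sum>i<S. Q i n)"
    if sP: "(\<Sum>i<S. P i n) = - (\<Sum>i<S. V i n)" for n
  proof (cases "\<gamma> \<ge> 1/2")
    case True
    have "0 \<le> (\<Sum>i<S. V i n)" by (rule sum_nonneg, insert Vnn, auto)
    moreover have "0 \<le> (\<Sum>i<S. Q i n)" by (rule sum_nonneg, insert Qnn, auto)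
    moreover have "0 \<le> (\<gamma> - 1/2) * \<Delta>t" using True dt by simp
    ultimately show ?thesis by (metis add_nonneg_nonneg mult_nonneg_nonneg)
  next
    case False
    hence g: "\<gamma> < 1/2" by simp
    define W where "W = 1 / ((1/2 - \<gamma>) * \<Delta>t)"
    have hpos: "(1/2 - \<gamma>) * \<Delta>t > 0" using g dt by simp
    have Wpos: "W > 0" unfolding W_def using hpos by simp
    have per: "-2 * P i n \<le> V i n + W * Q i n" if i: "i < S" for i
    proof -
      have om: "omega_max (K i) (M i) * ((1/2 - \<gamma>) * \<Delta>t) < 1"
      proof -
        have "\<Delta>t * (1 - 2*\<gamma>) * omega_max (K i) (M i) < 2" using cfl[OF g] i by blast
        moreover have "omega_max (K i) (M i) * ((1/2 - \<gamma>) * \<Delta>t) = (\<Delta>t * (1 - 2*\<gamma>) * omega_max (K i) (M i)) / 2"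
          by (simp add: algebra_simps)
        ultimately show ?thesis by linarith
      qed
      hence "omega_max (K i) (M i) < W" unfolding W_def using hpos by (simp add: less_divide_eq)
      hence "omega_max (K i) (M i) * V i n \<le> W * V i n" using Vnn[OF i] by (intro mult_right_mono, auto)
      moreover have "R i n \<le> omega_max (K i) (M i) * V i n"
        unfolding R_def V_def by (rule omega_bound[OF M_car[OF i] M_pd[OF i] K_car[OF i] K_psd[OF i] vg_car[OF i]])
      ultimately have RW: "R i n / W \<le> V i n" using Wpos by (simp add: divide_le_eq mult.commute)
      have "-2 * P i n \<le> (1/W) * R i n + Q i n / (1/W)" unfolding P_def R_def Q_def
        by (rule psd_amgm[OF K_car[OF i] K_psd[OF i] vg_car[OF i] th_car[OF i]], insert Wpos, simp)
      also have "\<dots> = R i n / W + W * Q i n" by simp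
      finally show ?thesis using RW by linarith
    qed
    have "(\<Sum>i<S. -2 * P i n) \<le> (\<Sum>i<S. V i n + W * Q i n)" by (rule sum_mono, insert per, auto)
    moreover have "(\<Sum>i<S. -2 * P i n) = -2 * (\<Sum>i<S. P i n)" by (simp add: sum_distrib_left)
    moreover have "(\<Sum>i<S. V i n + W * Q i n) = (\<Sum>i<S. V i n) + W * (\<Sum>i<S. Q i n)"
      by (simp add: sum.distrib sum_distrib_left)
    ultimately have "2 * (\<Sum>i<S. V i n) \<le> (\<Sum>i<S. V i n) + W * (\<Sum>i<S. Q i n)"
      using sP by linarith
    hence "(\<Sum>i<S. V i n) \<le> W * (\<Sum>i<S. Q i n)" by simp
    hence "((1/2 - \<gamma>) * \<Delta>t) * (\<Sum>i<S. V i n) \<le> ((1/2 - \<gamma>) * \<Delta>t) * (W * (\<Sum>i<S. Q i n))"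
      using hpos by (intro mult_left_mono, auto)
    also have "\<dots> = (((1/2 - \<gamma>) * \<Delta>t) * W) * (\<Sum>i<S. Q i n)" by (simp only: mult.assoc)
    also have "((1/2 - \<gamma>) * \<Delta>t) * W = 1" unfolding W_def
    proof -
      have "(1/2 - \<gamma>) * \<Delta>t \<noteq> 0" using hpos by linarith
      thus "(1/2 - \<gamma>) * \<Delta>t * (1 / ((1/2 - \<gamma>) * \<Delta>t)) = 1" by (metis divide_self_if times_divide_eq_right mult_1_right)
    qed
    also have "1 * (\<Sum>i<S. Q i n) = (\<Sum>i<S. Q i n)" by simp
    finally have "((1/2 - \<gamma>) * \<Delta>t) * (\<Sum>i<S. V i n) \<le> (\<Sum>i<S. Q i n)" .
    moreover have "(\<gamma> - 1/2) * \<Delta>t * (\<Sum>i<S. V i n) = - (((1/2 - \<gamma>) * \<Delta>t) * (\<Sum>i<S. V i n))"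
      by (simp add: algebra_simps)
    ultimately show ?thesis by linarith
  qed
  have dec: "(\<Sum>i<S. E i (Suc n)) \<le> (\<Sum>i<S. E i n)" if n1: "n \<ge> 1" for n
  proof -
    obtain k where k: "n = Suc k" using n1 by (cases n, auto)
    have G1: "(\<Sum>i<S. G i n n) = 0" unfolding k by (rule Gz)
    have G2: "(\<Sum>i<S. G i (Suc n) n) = 0" by (rule Gz)
    have a1: "(\<Sum>i<S. T i n + Q i n) = (\<Sum>i<S. (1 - \<gamma>) * G i n n + \<gamma> * G i (Suc n) n)"
      by (rule sum.cong[OF refl], rule I1, simp)
    have a2: "(\<Sum>i<S. (1 - \<gamma>) * G i n n + \<gamma> * G i (Suc n) n)
        = (1 - \<gamma>) * (\<Sum>i<S. G i n n) + \<gamma> * (\<Sum>i<S. G i (Suc n) n)"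
      by (simp only: sum.distrib sum_distrib_left)
    have s1: "(\<Sum>i<S. T i n) + (\<Sum>i<S. Q i n) = 0"
      using a1 a2 G1 G2 by (simp only: sum.distrib)
    have b1: "(\<Sum>i<S. \<Delta>t * (V i n + P i n)) = (\<Sum>i<S. G i (Suc n) n - G i n n)"
      by (rule sum.cong[OF refl], rule I2, simp)
    have b2: "(\<Sum>i<S. \<Delta>t * (V i n + P i n)) = \<Delta>t * ((\<Sum>i<S. V i n) + (\<Sum>i<S. P i n))"
      by (simp add: sum.distrib sum_distrib_left distrib_left)
    have b3: "(\<Sum>i<S. G i (Suc n) n - G i n n) = (\<Sum>i<S. G i (Suc n) n) - (\<Sum>i<S. G i n n)"
      by (rule sum_subtractf)
    have "\<Delta>t * ((\<Sum>i<S. V i n) + (\<Sum>i<S. P i n)) = 0" using b1 b2 b3 G1 G2 by simp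
    hence "(\<Sum>i<S. P i n) = - (\<Sum>i<S. V i n)" using dtne by simp
    from key[OF this] have kk: "0 \<le> (\<gamma> - 1/2) * \<Delta>t * (\<Sum>i<S. V i n) + (\<Sum>i<S. Q i n)" .
    have c1: "(\<Sum>i<S. T i n) = (\<Sum>i<S. (E i (Suc n) - E i n) / (2 * \<Delta>t) + (\<gamma> - 1/2) * \<Delta>t * V i n)"
      by (rule sum.cong[OF refl], rule I3, simp)
    have c2: "(\<Sum>i<S. (E i (Suc n) - E i n) / (2 * \<Delta>t) + (\<gamma> - 1/2) * \<Delta>t * V i n)
       = ((\<Sum>i<S. E i (Suc n)) - (\<Sum>i<S. E i n)) / (2 * \<Delta>t) + (\<gamma> - 1/2) * \<Delta>t * (\<Sum>i<S. V i n)"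
      by (simp only: sum.distrib sum_distrib_left sum_divide_distrib[symmetric] sum_subtractf)
    have "((\<Sum>i<S. E i (Suc n)) - (\<Sum>i<S. E i n)) / (2 * \<Delta>t) \<le> 0" using s1 kk c1 c2 by linarith
    thus ?thesis using dt by (simp add: divide_le_0_iff)
  qed
  define SE where "SE = (\<Sum>i<S. E i 1)"
  have SEb: "(\<Sum>i<S. E i n) \<le> SE" if "n \<ge> 1" for n
    using that
  proof (induction n rule: dec_induct)
    case base thus ?case unfolding SE_def by simp
  next
    case (step n) thus ?case using dec[of n] by linarith
  qed
  have Eb: "E i (Suc n) \<le> SE" if i: "i < S" for i n
  proof -
    have "E i (Suc n) \<le> (\<Sum>i<S. E i (Suc n))"
      by (rule member_le_sum[where f="\<lambda>i. E i (Suc n)"], insert i Enn, auto)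
    thus ?thesis using SEb[of "Suc n"] by simp
  qed
  have cbd: "cb (m i) (d i)" if i: "i < S" for i
  proof -
    obtain c where c: "c > 0" "\<And>x. x \<in> carrier_vec (m i) \<Longrightarrow> x \<bullet> x \<le> c * bf (M i) x x"
      using pd_coercive[OF M_car[OF i] M_pd[OF i]] by auto
    have "d i (Suc n) \<bullet> d i (Suc n) \<le> c * SE" for n
    proof -
      have "d i (Suc n) \<bullet> d i (Suc n) \<le> c * E i (Suc n)" unfolding E_def by (rule c(2)[OF d_car[OF i]])
      also have "\<dots> \<le> c * SE" using Eb[OF i] c(1) by simp
      finally show ?thesis .
    qed
    hence "cb (m i) (\<lambda>n. d i (Suc n))" by (intro cb_of_dot, insert d_car[OF i], auto)
    thus ?thesis by (rule cb_shift)
  qed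
  have cbvg: "cb (m i) (vg i)" if i: "i < S" for i
  proof (rule cb_lin[OF cb_tail[OF cbd[OF i]] cbd[OF i], where a="1/\<Delta>t" and b="-1/\<Delta>t"])
    fix n j assume j: "j < m i"
    have "d i (Suc n) $ j = d i n $ j + \<Delta>t * vg i n $ j"
      using eq_update[OF i, of n] d_car[OF i, of n] vg_car[OF i, of n] j by simp
    thus "vg i n $ j = 1 / \<Delta>t * d i (Suc n) $ j + - 1 / \<Delta>t * d i n $ j"
      using dtne by (simp add: field_simps)
  qed
  have cbv1: "cb (m i) (v1 i)" if i: "i < S" for i
  proof (rule cb_lin[OF cbvg[OF i] cb_tail[OF cbvg[OF i]], where a=\<gamma> and b="1 - \<gamma>"])
    fix n j assume j: "j < m i"
    show "v1 i n $ j = \<gamma> * vg i n $ j + (1 - \<gamma>) * vg i (Suc n) $ j"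
      using vg_car[OF i, of n] vg_car[OF i, of "Suc n"] j by (simp add: v1_def)
  qed
  have cbth: "cb (m i) (th i)" if i: "i < S" for i
  proof (rule cb_lin[OF cbd[OF i] cb_tail[OF cbd[OF i]], where a="1 - \<gamma>" and b=\<gamma>])
    fix n j assume j: "j < m i"
    show "th i n $ j = (1 - \<gamma>) * d i n $ j + \<gamma> * d i (Suc n) $ j"
      using d_car[OF i, of n] d_car[OF i, of "Suc n"] j by (simp add: th_def)
  qed
  have cbT: "cb (m i) (\<lambda>n. transpose_mat (C i) *\<^sub>v lg n)" if i: "i < S" for i
  proof (rule cb_lin[OF cb_mat[OF M_car[OF i] vg_car[OF i] cbvg[OF i]]
                        cb_mat[OF K_car[OF i] th_car[OF i] cbth[OF i]], where a=1 and b=1])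
    fix n j assume j: "j < m i"
    show "(transpose_mat (C i) *\<^sub>v lg n) $ j = 1 * (M i *\<^sub>v vg i n) $ j + 1 * (K i *\<^sub>v th i n) $ j"
      unfolding eq_motion[OF i, symmetric] th_def[symmetric] using j M_car[OF i] K_car[OF i]
      by simp
  qed
  have cblg: "cb p lg" by (rule lam_bound[OF C_car C_rank lg_car cbT])
  have cbl1: "cb p l1"
  proof (rule cb_lin[OF cblg cb_tail[OF cblg], where a=\<gamma> and b="1 - \<gamma>"])
    fix n j assume j: "j < p"
    show "l1 n $ j = \<gamma> * lg n $ j + (1 - \<gamma>) * lg (Suc n) $ j"
      using lg_car[of n] lg_car[of "Suc n"] j by (simp add: l1_def)
  qed
  show ?thesis
  proof (intro conjI allI impI)
    fix i assume i: "i < S"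
    show "bounded_seq (d i)" by (rule cb_bseq[OF d_car[OF i] cbd[OF i]])
    show "bounded_seq (vg i)" by (rule cb_bseq[OF vg_car[OF i] cbvg[OF i]])
    have "v1 i n \<in> carrier_vec (m i)" for n using vg_car[OF i, of n] vg_car[OF i, of "Suc n"] by (simp add: v1_def)
    thus "bounded_seq (v1 i)" by (rule cb_bseq[OF _ cbv1[OF i]])
  next
    show "bounded_seq lg" by (rule cb_bseq[OF lg_car cblg])
    have "l1 n \<in> carrier_vec p" for n using lg_car[of n] lg_car[of "Suc n"] by (simp add: l1_def)
    thus "bounded_seq l1" by (rule cb_bseq[OF _ cbl1])
  qed
qed

end
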